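(* Let $\mathbf{w} = (w_1, w_2, \ldots)$ be a sequence of words in $A^+$ (with $A=\{a,b\}$) such that for every $n \in \mathbb{N}$ there are no $s, t, v \in A^*$ with $w_n = stv$ and $st, tv \in S_{\mathbf{w}}$. For each $n$, let $p_n$ and $s_n$ be respectively the longest prefix and the longest suffix of $w_n$ belonging to $S_{\mathbf{w}}$. Then for every $n$ there exists $u_n \in A^+$ such that $w_n = p_n u_n s_n$.
   Context: $A = \{a,b\}$; $A^*$ is the free monoid on $A$ with empty word $\varepsilon$ (which is a prefix and a suffix of every word), and $A^+ = A^*\setminus\{\varepsilon\}$. For a sequence $\mathbf{w}=(w_1,w_2,\ldots)$ in $A^+$, $S_{\mathbf{w}}$ is the least submonoid $S$ of $A^*$ satisfying: (C1) if $w_n = s v u v s'$ for some $n$, with $s, s' \in S$ and $u, v \in A^*$, then $v \in S$; (C2) if $w_m = s v t$ and $w_n = t' v s'$ for some $m \neq n$, with $s, s' \in S$ and $t, t', v \in A^*$, then $v \in S$. *)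

theory Defs
  imports Main "HOL-Library.Sublist"
begin

datatype letter = a | b

type_synonym word = "letter list"

definition submonoid :: "word set \<Rightarrow> bool" where
  "submonoid S \<longleftrightarrow> [] \<in> S \<and> (\<forall>x\<in>S. \<forall>y\<in>S. x @ y \<in> S)"

definition cond_C1 :: "(nat \<Rightarrow> word) \<Rightarrow> word set \<Rightarrow> bool" where
  "cond_C1 w S \<longleftrightarrow>
     (\<forall>n s v u s'. w n = s @ v @ u @ v @ s' \<and> s \<in> S \<and> s' \<in> S \<longrightarrow> v \<in> S)"

definition cond_C2 :: "(nat \<Rightarrow> word) \<Rightarrow> word set \<Rightarrow> bool" where
  "cond_C2 w S \<longleftrightarrow>
     (\<forall>m n s v t t' s'. m \<noteq> n \<and> w m = s @ v @ t \<and> w n = t' @ v @ s' \<and> s \<in> S \<and> s' \<in> S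
        \<longrightarrow> v \<in> S)"

definition S_w :: "(nat \<Rightarrow> word) \<Rightarrow> word set" where
  "S_w w = \<Inter> {S. submonoid S \<and> cond_C1 w S \<and> cond_C2 w S}"

definition is_longest_prefix_in :: "word set \<Rightarrow> word \<Rightarrow> word \<Rightarrow> bool" where
  "is_longest_prefix_in S x p \<longleftrightarrow>
     prefix p x \<and> p \<in> S \<and> (\<forall>q. prefix q x \<and> q \<in> S \<longrightarrow> length q \<le> length p)"

definition is_longest_suffix_in :: "word set \<Rightarrow> word \<Rightarrow> word \<Rightarrow> bool" where
  "is_longest_suffix_in S x p \<longleftrightarrow>
     suffix p x \<and> p \<in> S \<and> (\<forall>q. suffix q x \<and> q \<in> S \<longrightarrow> length q \<le> length p)"

end

theory Submission
  imports Defs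
begin

theorem lemma3p5:
  fixes w :: "nat \<Rightarrow> word"
  assumes nonempty: "\<And>n. w n \<noteq> []"
    and hyp: "\<And>n. \<not> (\<exists>s t v. w n = s @ t @ v \<and> s @ t \<in> S_w w \<and> t @ v \<in> S_w w)"
  shows "\<forall>n p s. is_longest_prefix_in (S_w w) (w n) p \<and> is_longest_suffix_in (S_w w) (w n) s
           \<longrightarrow> (\<exists>u. u \<noteq> [] \<and> w n = p @ u @ s)"
proof (intro allI impI)
  fix n p s
  assume H: "is_longest_prefix_in (S_w w) (w n) p \<and> is_longest_suffix_in (S_w w) (w n) s"
  then have pp: "prefix p (w n)" and pS: "p \<in> S_w w" and ss: "suffix s (w n)" and sS: "s \<in> S_w w"
    unfolding is_longest_prefix_in_def is_longest_suffix_in_def by auto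
  from pp obtain r where r: "w n = p @ r" by (auto simp: prefix_def)
  from ss obtain q where q: "w n = q @ s" by (auto simp: suffix_def)
  show "\<exists>u. u \<noteq> [] \<and> w n = p @ u @ s"
  proof (cases "length q \<le> length p")
    case True
    define t where "t = drop (length q) p"
    have "take (length q) p = q" using r q True
      by (metis append_eq_append_conv_if)
    then have p2: "p = q @ t" unfolding t_def by (metis append_take_drop_id)
    then have "q @ s = q @ t @ r" using r q by simp
    then have "s = t @ r" by simp
    then have "w n = q @ t @ r \<and> q @ t \<in> S_w w \<and> t @ r \<in> S_w w" using p2 r pS sS by simp
    then show ?thesis using hyp[of n] by blast
  next
    case False
    define u where "u = drop (length p) q"
    have "take (length p) q = p" using r q False
      by (metis append_eq_append_conv_if less_or_eq_imp_le not_le take_all_iff take_append)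
    then have q2: "q = p @ u" unfolding u_def by (metis append_take_drop_id)
    have "u \<noteq> []" using False q2 by auto
    then show ?thesis using q q2 by auto
  qed
qed

end
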